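(* Let Assumption 1 hold, let $\{\mathbf x_k\}$ be generated by Algorithm MADS-PIP, let $\bar{\mathbf x}$ be an end-path point and let $\bar{\mathbf d}$ be a path-refining direction for $\bar{\mathbf x}$. If $f$, $c^{int}$ and $c^{ext}$ are Lipschitz continuous near $\bar{\mathbf x}$, then $(c^{ext})^\circ(\bar{\mathbf x};\bar{\mathbf d})\ge0$.
   Context: Consider the problem of minimizing $f(\mathbf x)$ over $\mathbf x\in\mathbb R^n$ subject to $g_\ell(\mathbf x)\le 0$ ($\ell=1,\dots,m$) and $h_j(\mathbf x)=0$ ($j=1,\dots,p$), where $f,g_\ell,h_j:\mathbb R^n\to\mathbb R\cup\{+\infty\}$. The index set $\{1,\dots,m\}$ is partitioned into disjoint sets $\mathcal G^{int}$ and $\mathcal G^{ext}$, fixed throughout. Define $\Omega^{int}=\{\mathbf x: g_\ell(\mathbf x)\le 0\ \forall\ell\in\mathcal G^{int}\}$, $\Omega^{ext}=\{\mathbf x: g_\ell(\mathbf x)\le0\ \forall \ell\in\mathcal G^{ext},\ h_j(\mathbf x)=0\ \forall j\}$, $\Omega=\Omega^{int}\cap\Omega^{ext}$. Let $\phi^{prox}(\mathbf x)=\max_{\ell\in\mathcal G^{int}}g_\ell(\mathbf x)$; let $c^{int}(\mathbf x)=-\prod_{\ell\in\mathcal G^{int}}\min\{1,-g_\ell(\mathbf x)\}$ if $g_\ell(\mathbf x)\le0$ for all $\ell\in\mathcal G^{int}$, and $c^{int}(\mathbf x)=\phi^{prox}(\mathbf x)$ otherwise; let $c^{ext}(\mathbf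 x)=\sum_{\ell\in\mathcal G^{ext}}(\max\{0,g_\ell(\mathbf x)\})^2+\sum_{j=1}^p h_j(\mathbf x)^2$. (If $\mathcal G^{int}=\emptyset$, then $c^{int}\equiv-1$ and $[\phi^{prox}]^2$ is read as $+\infty$.) For $\rho>0$ the merit function is $z(\mathbf x;\rho)=f(\mathbf x)-\rho\log(-c^{int}(\mathbf x))+\frac1\rho c^{ext}(\mathbf x)$ if $c^{int}(\mathbf x)<0$, and $z(\mathbf x;\rho)=+\infty$ otherwise. Algorithm MADS-PIP: inputs $\mathbf x_0$ with $g_\ell(\mathbf x_0)<0$ for all $\ell\in\mathcal G^{int}$ and $z(\mathbf x_0;\rho_0)<+\infty$, $\rho_0>0$, $\theta_\rho\in(0,1)$, $\Delta_0>0$, $\theta_\Delta\in(0,1)\cap\mathbb Q$, $\beta>1$. For $k=0,1,2,\dots$ (the algorithm never stops): mesh $\mathcal M_k=\{\mathbf x_k+\delta_k\mathbf u:\mathbf u\in\mathbb Z^n\}$ with $\delta_k=\min\{\Delta_k,\Delta_k^2/\Delta_0\}$; frame $\mathcal F_k=\{\mathbf x\in\mathcal M_k:\|\mathbf x-\mathbf x_k\|\le\Delta_k\}$. Search: a finite (possibly empty) set $\mathcal S_k\subset\mathcal M_k$ is examined; if some $\mathbf s\in\mathcal S_k$ satisfies $z(\mathbf s;\rho_k)<z(\mathbf x_k;\rho_k)$, set $\mathbf x_{k+1}=\mathbf s$, $\Delta_{k+1}=\Delta_k/\theta_\Delta$, $\rho_{k+1}=\rho_k$ (successful iteration). Otherwise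 poll: choose a finite set $\mathcal D_k$ of nonzero directions with $\mathbf x_k+\mathbf d\in\mathcal F_k$ for all $\mathbf d\in\mathcal D_k$; if some $\mathbf d\in\mathcal D_k$ satisfies $z(\mathbf x_k+\mathbf d;\rho_k)<z(\mathbf x_k;\rho_k)$, set $\mathbf x_{k+1}=\mathbf x_k+\mathbf d$, $\Delta_{k+1}=\Delta_k/\theta_\Delta$, $\rho_{k+1}=\rho_k$ (successful). Otherwise the iteration is unsuccessful: $\mathbf x_{k+1}=\mathbf x_k$, $\Delta_{k+1}=\theta_\Delta\Delta_k$, and $\rho_{k+1}=\theta_\rho\rho_k$ if $\Delta_{k+1}\le\min\{\rho_k^\beta,[\phi^{prox}(\mathbf x_k)]^2\}$, else $\rho_{k+1}=\rho_k$. The path-following index set is $\mathcal K_\rho=\{k:\rho_{k+1}<\rho_k\}$ and $\{\mathbf x_k\}_{k\in\mathcal K_\rho}$ is the path-following subsequence. A point $\bar{\mathbf x}$ is an end-path point if there is an infinite $\mathcal K_\rho^{x}\subseteq\mathcal K_\rho$ with $\lim_{k\in\mathcal K_\rho^x}\mathbf x_k=\bar{\mathbf x}$; $\{\mathbf x_k\}_{k\in\mathcal K^x_\rho}$ is then an end-path subsequence. Assumption 1: for every $\alpha\in\mathbb R$ the level set $\{\mathbf x\in\mathbb R^n: f(\mathbf x)\le\alpha\}$ is bounded. Path-refining direction: $\bar{\mathbf d}\in\mathbb R^n$ is a path-refining direction for the end-path point $\bar{\mathbf x}$ if there exist an infinite index set $\mathcal K^x_\rho\subseteq\mathcal K_\rho$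 with $\lim_{k\in\mathcal K^x_\rho}\mathbf x_k=\bar{\mathbf x}$ and poll directions $\mathbf d_k\in\mathcal D_k$ ($k\in\mathcal K^x_\rho$) such that $\lim_{k\in\mathcal K^x_\rho}\mathbf d_k/\|\mathbf d_k\|=\bar{\mathbf d}$ and $c^{int}(\mathbf x_k+\mathbf d_k)\le c^{int}(\mathbf x_k)$ for all $k\in\mathcal K^x_\rho$. Clarke generalized directional derivative of $c$ at $\mathbf x$ in direction $\mathbf d$: $c^\circ(\mathbf x;\mathbf d)=\limsup_{\mathbf y\to\mathbf x,\ t\searrow0}\frac{c(\mathbf y+t\mathbf d)-c(\mathbf y)}{t}$. *)

theory Defs
  imports "HOL-Analysis.Analysis"
begin

definition phi_prox :: "(nat \<Rightarrow> 'a \<Rightarrow> ereal) \<Rightarrow> nat set \<Rightarrow> 'a \<Rightarrow> ereal" where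
  "phi_prox g Gint x = Max ((\<lambda>l. g l x) ` Gint)"

definition phi_prox_sq :: "(nat \<Rightarrow> 'a \<Rightarrow> ereal) \<Rightarrow> nat set \<Rightarrow> 'a \<Rightarrow> ereal" where
  "phi_prox_sq g Gint x = (if Gint = {} then \<infinity> else (phi_prox g Gint x)^2)"

definition c_int :: "(nat \<Rightarrow> 'a \<Rightarrow> ereal) \<Rightarrow> nat set \<Rightarrow> 'a \<Rightarrow> ereal" where
  "c_int g Gint x =
     (if (\<forall>l\<in>Gint. g l x \<le> 0) then - (\<Prod>l\<in>Gint. min 1 (- g l x))
      else phi_prox g Gint x)"

definition c_ext :: "(nat \<Rightarrow> 'a \<Rightarrow> ereal) \<Rightarrow> nat set \<Rightarrow> (nat \<Rightarrow> 'a \<Rightarrow> ereal) \<Rightarrow> nat \<Rightarrow> 'a \<Rightarrow> ereal" where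
  "c_ext g Gext h p x =
     (\<Sum>l\<in>Gext. (max 0 (g l x))^2) + (\<Sum>j\<in>{1..p}. (h j x)^2)"

definition merit :: "('a \<Rightarrow> ereal) \<Rightarrow> (nat \<Rightarrow> 'a \<Rightarrow> ereal) \<Rightarrow> nat set \<Rightarrow> nat set
    \<Rightarrow> (nat \<Rightarrow> 'a \<Rightarrow> ereal) \<Rightarrow> nat \<Rightarrow> 'a \<Rightarrow> real \<Rightarrow> ereal" where
  "merit f g Gint Gext h p x \<rho> =
     (if c_int g Gint x < 0 then
        f x - ereal (\<rho> * ln (real_of_ereal (- c_int g Gint x)))
            + c_ext g Gext h p x * ereal (1 / \<rho>)
      else \<infinity>)"

definition int_vectors :: "(real^'n) set" where
  "int_vectors = {u. \<forall>i. u $ i \<in> \<int>}"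

definition mesh :: "real^'n \<Rightarrow> real \<Rightarrow> real \<Rightarrow> (real^'n) set" where
  "mesh xk \<Delta>0 \<Delta>k = {xk + min \<Delta>k (\<Delta>k^2 / \<Delta>0) *\<^sub>R u | u. u \<in> int_vectors}"

definition frame :: "real^'n \<Rightarrow> real \<Rightarrow> real \<Rightarrow> (real^'n) set" where
  "frame xk \<Delta>0 \<Delta>k = {y \<in> mesh xk \<Delta>0 \<Delta>k. norm (y - xk) \<le> \<Delta>k}"

text \<open>A run of MADS-PIP: iterates x, mesh/frame sizes Delta, barrier parameters rho,
  search sets S and poll sets D (D k is only consulted when the search fails).\<close>
definition mads_pip_run ::
  "(real^'n \<Rightarrow> ereal) \<Rightarrow> (nat \<Rightarrow> real^'n \<Rightarrow> ereal) \<Rightarrow> nat set \<Rightarrow> nat set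
   \<Rightarrow> (nat \<Rightarrow> real^'n \<Rightarrow> ereal) \<Rightarrow> nat
   \<Rightarrow> real^'n \<Rightarrow> real \<Rightarrow> real \<Rightarrow> real \<Rightarrow> real \<Rightarrow> real
   \<Rightarrow> (nat \<Rightarrow> real^'n) \<Rightarrow> (nat \<Rightarrow> real) \<Rightarrow> (nat \<Rightarrow> real)
   \<Rightarrow> (nat \<Rightarrow> (real^'n) set) \<Rightarrow> (nat \<Rightarrow> (real^'n) set) \<Rightarrow> bool" where
  "mads_pip_run f g Gint Gext h p x0 \<rho>0 \<theta>\<rho> \<Delta>0 \<theta>\<Delta> \<beta> x \<Delta> \<rho> S D \<longleftrightarrow>
     (\<forall>l\<in>Gint. g l x0 < 0) \<and> merit f g Gint Gext h p x0 \<rho>0 < \<infinity> \<and>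
     \<rho>0 > 0 \<and> 0 < \<theta>\<rho> \<and> \<theta>\<rho> < 1 \<and> \<Delta>0 > 0 \<and> 0 < \<theta>\<Delta> \<and> \<theta>\<Delta> < 1 \<and> \<theta>\<Delta> \<in> \<rat> \<and> \<beta> > 1 \<and>
     x 0 = x0 \<and> \<Delta> 0 = \<Delta>0 \<and> \<rho> 0 = \<rho>0 \<and>
     (\<forall>k. let z = (\<lambda>y. merit f g Gint Gext h p y (\<rho> k)) in
        finite (S k) \<and> S k \<subseteq> mesh (x k) \<Delta>0 (\<Delta> k) \<and>
        finite (D k) \<and> 0 \<notin> D k \<and> (\<forall>d\<in>D k. x k + d \<in> frame (x k) \<Delta>0 (\<Delta> k)) \<and>
        (if (\<exists>s\<in>S k. z s < z (x k)) then
           x (Suc k) \<in> {s \<in> S k. z s < z (x k)} \<and>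
           \<Delta> (Suc k) = \<Delta> k / \<theta>\<Delta> \<and> \<rho> (Suc k) = \<rho> k
         else if (\<exists>d\<in>D k. z (x k + d) < z (x k)) then
           x (Suc k) \<in> {x k + d | d. d \<in> D k \<and> z (x k + d) < z (x k)} \<and>
           \<Delta> (Suc k) = \<Delta> k / \<theta>\<Delta> \<and> \<rho> (Suc k) = \<rho> k
         else
           x (Suc k) = x k \<and> \<Delta> (Suc k) = \<theta>\<Delta> * \<Delta> k \<and>
           \<rho> (Suc k) = (if ereal (\<Delta> (Suc k)) \<le> min (ereal (\<rho> k powr \<beta>)) (phi_prox_sq g Gint (x k))
                        then \<theta>\<rho> * \<rho> k else \<rho> k)))"

definition path_following_set :: "(nat \<Rightarrow> real) \<Rightarrow> nat set" where
  "path_following_set \<rho> = {k. \<rho> (Suc k) < \<rho> k}"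

definition end_path_point :: "(nat \<Rightarrow> real) \<Rightarrow> (nat \<Rightarrow> real^'n) \<Rightarrow> real^'n \<Rightarrow> bool" where
  "end_path_point \<rho> x xbar \<longleftrightarrow>
     (\<exists>K. infinite K \<and> K \<subseteq> path_following_set \<rho> \<and>
          (x \<longlongrightarrow> xbar) (inf sequentially (principal K)))"

definition path_refining_direction ::
  "(nat \<Rightarrow> real^'n \<Rightarrow> ereal) \<Rightarrow> nat set \<Rightarrow> (nat \<Rightarrow> real) \<Rightarrow> (nat \<Rightarrow> real^'n)
   \<Rightarrow> (nat \<Rightarrow> (real^'n) set) \<Rightarrow> real^'n \<Rightarrow> real^'n \<Rightarrow> bool" where
  "path_refining_direction g Gint \<rho> x D xbar dbar \<longleftrightarrow>
     (\<exists>K d. infinite K \<and> K \<subseteq> path_following_set \<rho> \<and>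
          (x \<longlongrightarrow> xbar) (inf sequentially (principal K)) \<and>
          (\<forall>k\<in>K. d k \<in> D k \<and> c_int g Gint (x k + d k) \<le> c_int g Gint (x k)) \<and>
          ((\<lambda>k. (1 / norm (d k)) *\<^sub>R d k) \<longlongrightarrow> dbar) (inf sequentially (principal K)))"

definition lipschitz_near :: "('a::metric_space \<Rightarrow> ereal) \<Rightarrow> 'a \<Rightarrow> bool" where
  "lipschitz_near c x \<longleftrightarrow>
     (\<exists>e>0. \<exists>L. (\<forall>y\<in>ball x e. \<bar>c y\<bar> \<noteq> \<infinity>) \<and> L-lipschitz_on (ball x e) (\<lambda>y. real_of_ereal (c y)))"

definition clarke_dd :: "('a::real_normed_vector \<Rightarrow> real) \<Rightarrow> 'a \<Rightarrow> 'a \<Rightarrow> ereal" where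
  "clarke_dd c x d =
     Limsup (at (x, 0) within UNIV \<times> {0<..}) (\<lambda>(y, t). ereal ((c (y + t *\<^sub>R d) - c y) / t))"

end

theory Submission imports Defs begin
lemma limsup_ge0:
  fixes \<phi> :: "'a \<Rightarrow> ereal"
  assumes "\<And>P e. eventually P F \<Longrightarrow> (e::real) > 0 \<Longrightarrow> \<exists>z. P z \<and> ereal (-e) \<le> \<phi> z"
  shows "0 \<le> Limsup F \<phi>"
  unfolding Limsup_def
proof (rule INF_greatest)
  fix P assume "P \<in> {P. eventually P F}"
  then have ev: "eventually P F" by simp
  show "0 \<le> Sup (\<phi> ` Collect P)"
  proof (rule ereal_le_epsilon2)
    fix e :: real assume "0 < e"
    then obtain z where z: "P z" "ereal (-e) \<le> \<phi> z" using assms[OF ev] by blast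
    have "\<phi> z \<le> Sup (\<phi> ` Collect P)" using z(1) by (auto intro: Sup_upper)
    then have "ereal (-e) \<le> Sup (\<phi> ` Collect P)" using z(2) by simp
    then show "0 \<le> Sup (\<phi> ` Collect P) + ereal e"
      by (cases "Sup (\<phi> ` Collect P)") auto
  qed
qed

lemma ev_witness:
  assumes "infinite K" "eventually Q (inf sequentially (principal K))"
  shows "\<exists>k\<in>K. Q k"
proof -
  from assms(2) obtain N where N: "\<And>n. n \<ge> N \<Longrightarrow> n \<in> K \<longrightarrow> Q n"
    unfolding eventually_inf_principal eventually_sequentially by blast
  from assms(1) obtain n where "n \<in> K" "n \<ge> N"
    using infinite_nat_iff_unbounded_le by blast
  then show ?thesis using N by blast
qed

lemma merit_fin:
  assumes "merit f g Gint Gext h p s r < merit f g Gint Gext h p y r"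
  shows "c_int g Gint s < 0"
  using assms unfolding merit_def by (auto split: if_splits)

lemma merit_eq:
  assumes "c_int g Gint y = ereal b" "b < 0" "f y = ereal a" "c_ext g Gext h p y = ereal c"
  shows "merit f g Gint Gext h p y r = ereal (a - r * ln (- b) + c * (1 / r))"
  using assms unfolding merit_def by simp


lemma if3: "(if a then P1 else if b then P2 else P3) \<Longrightarrow> (a \<Longrightarrow> P1 \<Longrightarrow> Q) \<Longrightarrow> (\<not>a \<Longrightarrow> b \<Longrightarrow> P2 \<Longrightarrow> Q) \<Longrightarrow> (\<not>a \<Longrightarrow> \<not>b \<Longrightarrow> P3 \<Longrightarrow> Q) \<Longrightarrow> Q"
  by (auto split: if_splits)

theorem mainTheorem5:
  fixes f :: "real^'n \<Rightarrow> ereal" and g h :: "nat \<Rightarrow> real^'n \<Rightarrow> ereal"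
    and m p :: nat and Gint Gext :: "nat set"
    and x0 :: "real^'n" and \<rho>0 \<theta>\<rho> \<Delta>0 \<theta>\<Delta> \<beta> :: real
    and x :: "nat \<Rightarrow> real^'n" and \<Delta> \<rho> :: "nat \<Rightarrow> real"
    and S D :: "nat \<Rightarrow> (real^'n) set" and xbar dbar :: "real^'n"
  assumes f_range: "\<And>y. f y \<noteq> - \<infinity>"
    and g_range: "\<And>l y. l \<in> {1..m} \<Longrightarrow> g l y \<noteq> - \<infinity>"
    and h_range: "\<And>j y. j \<in> {1..p} \<Longrightarrow> h j y \<noteq> - \<infinity>"
    and partition: "Gint \<union> Gext = {1..m}" "Gint \<inter> Gext = {}"
    and assumption1: "\<And>\<alpha>::real. bounded {y. f y \<le> ereal \<alpha>}"
    and run: "mads_pip_run f g Gint Gext h p x0 \<rho>0 \<theta>\<rho> \<Delta>0 \<theta>\<Delta> \<beta> x \<Delta> \<rho> S D"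
    and endpath: "end_path_point \<rho> x xbar"
    and refining: "path_refining_direction g Gint \<rho> x D xbar dbar"
    and lip_f: "lipschitz_near f xbar"
    and lip_cint: "lipschitz_near (c_int g Gint) xbar"
    and lip_cext: "lipschitz_near (c_ext g Gext h p) xbar"
  shows "clarke_dd (\<lambda>y. real_of_ereal (c_ext g Gext h p y)) xbar dbar \<ge> 0"
proof -
  define z where "z = (\<lambda>k y. merit f g Gint Gext h p y (\<rho> k))"
  define E where "E = (\<lambda>y. real_of_ereal (c_ext g Gext h p y))"
  define Fr where "Fr = (\<lambda>y. real_of_ereal (f y))"
  define C where "C = (\<lambda>y. real_of_ereal (c_int g Gint y))"
  have params: "(\<forall>l\<in>Gint. g l x0 < 0)" "merit f g Gint Gext h p x0 \<rho>0 < \<infinity>"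
     "\<rho>0 > 0" "0 < \<theta>\<rho>" "\<theta>\<rho> < 1" "\<Delta>0 > 0" "0 < \<theta>\<Delta>" "\<theta>\<Delta> < 1" "\<beta> > 1"
     "x 0 = x0" "\<Delta> 0 = \<Delta>0" "\<rho> 0 = \<rho>0"
    using run unfolding mads_pip_run_def by auto
  have R: "\<forall>k. let z = (\<lambda>y. merit f g Gint Gext h p y (\<rho> k)) in
        finite (S k) \<and> S k \<subseteq> mesh (x k) \<Delta>0 (\<Delta> k) \<and>
        finite (D k) \<and> 0 \<notin> D k \<and> (\<forall>d\<in>D k. x k + d \<in> frame (x k) \<Delta>0 (\<Delta> k)) \<and>
        (if (\<exists>s\<in>S k. z s < z (x k)) then
           x (Suc k) \<in> {s \<in> S k. z s < z (x k)} \<and>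
           \<Delta> (Suc k) = \<Delta> k / \<theta>\<Delta> \<and> \<rho> (Suc k) = \<rho> k
         else if (\<exists>d\<in>D k. z (x k + d) < z (x k)) then
           x (Suc k) \<in> {x k + d | d. d \<in> D k \<and> z (x k + d) < z (x k)} \<and>
           \<Delta> (Suc k) = \<Delta> k / \<theta>\<Delta> \<and> \<rho> (Suc k) = \<rho> k
         else
           x (Suc k) = x k \<and> \<Delta> (Suc k) = \<theta>\<Delta> * \<Delta> k \<and>
           \<rho> (Suc k) = (if ereal (\<Delta> (Suc k)) \<le> min (ereal (\<rho> k powr \<beta>)) (phi_prox_sq g Gint (x k))
                        then \<theta>\<rho> * \<rho> k else \<rho> k))"
    using run unfolding mads_pip_run_def by blast
  have Rk: "finite (S k) \<and> S k \<subseteq> mesh (x k) \<Delta>0 (\<Delta> k) \<and>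
        finite (D k) \<and> 0 \<notin> D k \<and> (\<forall>d\<in>D k. x k + d \<in> frame (x k) \<Delta>0 (\<Delta> k)) \<and>
        (if (\<exists>s\<in>S k. z k s < z k (x k)) then
           x (Suc k) \<in> {s \<in> S k. z k s < z k (x k)} \<and>
           \<Delta> (Suc k) = \<Delta> k / \<theta>\<Delta> \<and> \<rho> (Suc k) = \<rho> k
         else if (\<exists>d\<in>D k. z k (x k + d) < z k (x k)) then
           x (Suc k) \<in> {x k + d | d. d \<in> D k \<and> z k (x k + d) < z k (x k)} \<and>
           \<Delta> (Suc k) = \<Delta> k / \<theta>\<Delta> \<and> \<rho> (Suc k) = \<rho> k
         else
           x (Suc k) = x k \<and> \<Delta> (Suc k) = \<theta>\<Delta> * \<Delta> k \<and>
           \<rho> (Suc k) = (if ereal (\<Delta> (Suc k)) \<le> min (ereal (\<rho> k powr \<beta>)) (phi_prox_sq g Gint (x k))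
                        then \<theta>\<rho> * \<rho> k else \<rho> k))" for k
    using R[THEN spec, of k] unfolding z_def Let_def .
  note Rif = Rk[THEN conjunct2, THEN conjunct2, THEN conjunct2, THEN conjunct2, THEN conjunct2]
  have rho_cases: "\<rho> (Suc k) = \<rho> k \<or> \<rho> (Suc k) = \<theta>\<rho> * \<rho> k" for k
    by (rule if3[OF Rif[of k]]) auto
  have x_cases: "x (Suc k) = x k \<or> z k (x (Suc k)) < z k (x k)" for k
    by (rule if3[OF Rif[of k]]) auto
  have D0: "0 \<notin> D k" for k using Rk[of k] by blast
  have Dnorm: "norm d' \<le> \<Delta> k" if "d' \<in> D k" for k d'
  proof -
    have "x k + d' \<in> frame (x k) \<Delta>0 (\<Delta> k)" using Rk[of k] that by blast
    then show ?thesis unfolding frame_def by simp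
  qed
  have Kfacts: "\<rho> (Suc k) = \<theta>\<rho> * \<rho> k \<and> \<Delta> (Suc k) = \<theta>\<Delta> * \<Delta> k \<and> \<Delta> (Suc k) \<le> \<rho> k powr \<beta>
      \<and> (\<forall>d'\<in>D k. \<not> z k (x k + d') < z k (x k))"
    if "k \<in> path_following_set \<rho>" for k
  proof -
    have lt: "\<rho> (Suc k) < \<rho> k" using that unfolding path_following_set_def by simp
    show ?thesis
    proof (rule if3[OF Rif[of k]], goal_cases)
      case 1 then show ?case using lt by simp
    next
      case 2 then show ?case using lt by simp
    next
      case 3 then show ?case using lt by (simp add: min.bounded_iff split: if_split_asm)
    qed
  qed
  have rho_pos: "\<rho> k > 0" for k
  proof (induction k)
    case 0 then show ?case using params by simp
  next
    case (Suc k) then show ?case using rho_cases[of k] params by auto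
  qed
  have rho_dec: "decseq \<rho>"
  proof (rule decseq_SucI)
    fix k show "\<rho> (Suc k) \<le> \<rho> k" using rho_cases[of k] rho_pos[of k] params
      by (auto simp: mult_le_cancel_right1)
  qed
  have cneg: "c_int g Gint (x k) < 0" for k
  proof (induction k)
    case 0 show ?case
    proof (rule ccontr)
      assume "\<not> c_int g Gint (x 0) < 0"
      then have "merit f g Gint Gext h p x0 \<rho>0 = \<infinity>" using params unfolding merit_def by simp
      then show False using params by simp
    qed
  next
    case (Suc k) then show ?case using x_cases[of k] merit_fin unfolding z_def by metis
  qed
  obtain K d where K: "infinite K" "K \<subseteq> path_following_set \<rho>"
      "(x \<longlongrightarrow> xbar) (inf sequentially (principal K))"
      "\<forall>k\<in>K. d k \<in> D k \<and> c_int g Gint (x k + d k) \<le> c_int g Gint (x k)"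
      "((\<lambda>k. (1 / norm (d k)) *\<^sub>R d k) \<longlongrightarrow> dbar) (inf sequentially (principal K))"
    using refining unfolding path_refining_direction_def by blast
  define G where "G = inf sequentially (principal K)"
  have evK: "eventually (\<lambda>k. k \<in> K) G" unfolding G_def eventually_inf_principal by simp
  have Gnb: "G \<noteq> bot"
  proof
    assume "G = bot"
    then have "eventually (\<lambda>_. False) G" by simp
    then show False using ev_witness[OF K(1)] unfolding G_def by blast
  qed
  obtain L where L: "\<rho> \<longlonglongrightarrow> L" "\<forall>i. L \<le> \<rho> i"
    using decseq_convergent[OF rho_dec, of 0] rho_pos less_imp_le by blast
  have L1: "((\<lambda>k. \<rho> (Suc k)) \<longlongrightarrow> L) G"
    unfolding G_def by (rule tendsto_mono[OF inf_le1]) (rule LIMSEQ_Suc[OF L(1)])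
  have L2: "((\<lambda>k. \<theta>\<rho> * \<rho> k) \<longlongrightarrow> \<theta>\<rho> * L) G"
    unfolding G_def by (intro tendsto_mult tendsto_const tendsto_mono[OF inf_le1] L(1))
  have "eventually (\<lambda>k. \<theta>\<rho> * \<rho> k = \<rho> (Suc k)) G"
    using evK by eventually_elim (use Kfacts K(2) in auto)
  then have L3: "((\<lambda>k. \<rho> (Suc k)) \<longlongrightarrow> \<theta>\<rho> * L) G"
    using L2 by (rule Lim_transform_eventually[rotated])
  have "L = \<theta>\<rho> * L" using tendsto_unique[OF Gnb L1 L3] .
  then have "L = 0" using params by (metis mult_cancel_right1 mult.commute less_irrefl)
  then have rhoG: "(\<rho> \<longlongrightarrow> 0) G"
    using L(1) unfolding G_def by (metis tendsto_mono[OF inf_le1])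
  have tA: "((\<lambda>k. \<rho> k powr \<beta> / \<theta>\<Delta>) \<longlongrightarrow> 0) G"
  proof (rule tendsto_divide_zero, rule tendsto_zero_powrI[OF rhoG tendsto_const])
    show "\<forall>\<^sub>F k in G. 0 \<le> \<rho> k" by (rule always_eventually) (use rho_pos less_imp_le in blast)
    show "0 < \<beta>" using params by simp
  qed
  have tB: "eventually (\<lambda>k. norm (d k) \<le> \<rho> k powr \<beta> / \<theta>\<Delta>) G"
    using evK
  proof eventually_elim
    case (elim k)
    then have kf: "\<Delta> (Suc k) = \<theta>\<Delta> * \<Delta> k" "\<Delta> (Suc k) \<le> \<rho> k powr \<beta>" "d k \<in> D k"
    proof -
      have "k \<in> path_following_set \<rho>" using elim K(2) by blast
      then show "\<Delta> (Suc k) = \<theta>\<Delta> * \<Delta> k" "\<Delta> (Suc k) \<le> \<rho> k powr \<beta>"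
        using Kfacts by blast+
      show "d k \<in> D k" using elim K(4) by blast
    qed
    then have "\<theta>\<Delta> * \<Delta> k \<le> \<rho> k powr \<beta>" by simp
    then have "\<Delta> k \<le> \<rho> k powr \<beta> / \<theta>\<Delta>" using params(7) by (simp add: pos_le_divide_eq mult.commute)
    then show ?case using Dnorm[OF kf(3)] by linarith
  qed
  have dG: "((\<lambda>k. norm (d k)) \<longlongrightarrow> 0) G"
  proof (rule tendsto_sandwich[OF _ tB tendsto_const tA])
    show "\<forall>\<^sub>F k in G. 0 \<le> norm (d k)" by (rule always_eventually) simp
  qed
  obtain e1 L1 where e1: "e1 > 0" "\<forall>y\<in>ball xbar e1. \<bar>f y\<bar> \<noteq> \<infinity>"
      "L1-lipschitz_on (ball xbar e1) Fr"
    using lip_f unfolding lipschitz_near_def Fr_def by blast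
  obtain e2 L2 where e2: "e2 > 0" "\<forall>y\<in>ball xbar e2. \<bar>c_int g Gint y\<bar> \<noteq> \<infinity>"
    using lip_cint unfolding lipschitz_near_def by blast
  obtain e3 L3 where e3: "e3 > 0" "\<forall>y\<in>ball xbar e3. \<bar>c_ext g Gext h p y\<bar> \<noteq> \<infinity>"
      "L3-lipschitz_on (ball xbar e3) E"
    using lip_cext unfolding lipschitz_near_def E_def by blast
  define r where "r = min e1 (min e2 e3)"
  have r: "r > 0" using e1 e2 e3 r_def by simp
  have subr: "ball xbar r \<subseteq> ball xbar e1" "ball xbar r \<subseteq> ball xbar e2" "ball xbar r \<subseteq> ball xbar e3"
    unfolding r_def by auto
  have L1r: "L1-lipschitz_on (ball xbar r) Fr" using lipschitz_on_subset[OF e1(3) subr(1)] .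
  have L3r: "L3-lipschitz_on (ball xbar r) E" using lipschitz_on_subset[OF e3(3) subr(3)] .
  have L1nn: "0 \<le> L1" using lipschitz_on_nonneg[OF e1(3)] .
  have L3nn: "0 \<le> L3" using lipschitz_on_nonneg[OF e3(3)] .
  have finf: "f y = ereal (Fr y)" if "y \<in> ball xbar r" for y
  proof -
    have "y \<in> ball xbar e1" using subr(1) that by blast
    then show ?thesis using e1(2) unfolding Fr_def by (simp add: ereal_real)
  qed
  have finC: "c_int g Gint y = ereal (C y)" if "y \<in> ball xbar r" for y
  proof -
    have "y \<in> ball xbar e2" using subr(2) that by blast
    then show ?thesis using e2(2) unfolding C_def by (simp add: ereal_real)
  qed
  have finE: "c_ext g Gext h p y = ereal (E y)" if "y \<in> ball xbar r" for y
  proof -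
    have "y \<in> ball xbar e3" using subr(3) that by blast
    then show ?thesis using e3(2) unfolding E_def by (simp add: ereal_real)
  qed
  \<comment> \<open>key inequality from the unsuccessful poll\<close>
  have key: "E (x k) - E (x k + d k) \<le> \<rho> k * L1 * norm (d k)"
    if "k \<in> K" "x k \<in> ball xbar r" "x k + d k \<in> ball xbar r" for k
  proof -
    let ?y = "x k + d k"
    have dk: "d k \<in> D k" and cle: "c_int g Gint ?y \<le> c_int g Gint (x k)" using K(4) that(1) by auto
    have nl: "\<not> z k ?y < z k (x k)" using Kfacts K(2) that(1) dk by blast
    have Cx: "C (x k) < 0" using cneg[of k] finC[OF that(2)] by simp
    have Cy: "C ?y \<le> C (x k)" using cle finC[OF that(2)] finC[OF that(3)] by simp
    have zx: "z k (x k) = ereal (Fr (x k) - \<rho> k * ln (- C (x k)) + E (x k) * (1 / \<rho> k))"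
      unfolding z_def by (rule merit_eq[where f=f and y="x k", OF finC[OF that(2)] Cx finf[OF that(2)] finE[OF that(2)]])
    have zy: "z k ?y = ereal (Fr ?y - \<rho> k * ln (- C ?y) + E ?y * (1 / \<rho> k))"
      unfolding z_def by (rule merit_eq[where f=f and y="x k + d k", OF finC[OF that(3)] _ finf[OF that(3)] finE[OF that(3)]])
        (use Cx Cy in simp)
    have ineq: "Fr (x k) - \<rho> k * ln (- C (x k)) + E (x k) * (1 / \<rho> k)
        \<le> Fr ?y - \<rho> k * ln (- C ?y) + E ?y * (1 / \<rho> k)"
      using nl zx zy by simp
    have lnle: "ln (- C (x k)) \<le> ln (- C ?y)" using Cx Cy by simp
    have "\<rho> k * ln (- C (x k)) \<le> \<rho> k * ln (- C ?y)"
      using lnle rho_pos[of k] by (simp add: mult_left_mono)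
    then have "E (x k) * (1 / \<rho> k) - E ?y * (1 / \<rho> k) \<le> Fr ?y - Fr (x k)"
      using ineq by linarith
    also have "\<dots> \<le> L1 * dist ?y (x k)"
      using lipschitz_onD[OF L1r that(3) that(2)] by (simp add: dist_real_def)
    also have "dist ?y (x k) = norm (d k)" by (simp add: dist_norm)
    finally have "(E (x k) - E ?y) / \<rho> k \<le> L1 * norm (d k)"
      by (simp add: diff_divide_distrib)
    then show ?thesis using rho_pos[of k] by (simp add: pos_divide_le_eq mult.commute mult.left_commute)
  qed
  show ?thesis
    unfolding clarke_dd_def
  proof (rule limsup_ge0)
    fix P :: "(real^'n) \<times> real \<Rightarrow> bool" and \<epsilon> :: real
    assume evP: "eventually P (at (xbar, 0) within UNIV \<times> {0<..})" and eps: "\<epsilon> > 0"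
    define s where "s = (\<lambda>k. (x k, norm (d k)))"
    have "filterlim s (at (xbar, 0) within UNIV \<times> {0<..}) G"
      unfolding filterlim_at
    proof
      show "eventually (\<lambda>k. s k \<in> UNIV \<times> {0<..} \<and> s k \<noteq> (xbar, 0)) G"
        using evK
      proof eventually_elim
        case (elim k)
        then have "d k \<noteq> 0" using K(4) D0[of k] by metis
        then show ?case unfolding s_def by simp
      qed
      show "(s \<longlongrightarrow> (xbar, 0)) G"
        unfolding s_def using K(3) dG unfolding G_def by (intro tendsto_Pair) auto
    qed
    then have evPs: "eventually (\<lambda>k. P (s k)) G"
      using evP by (simp add: filterlim_iff)
    define a where "a = min 1 (\<epsilon> / (2 * (L3 + 1)))"
    define b where "b = \<epsilon> / (2 * (L1 + 1))"
    have a: "a > 0" "a \<le> 1" "L3 * a \<le> \<epsilon> / 2"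
    proof -
      show "a > 0" "a \<le> 1" using eps L3nn unfolding a_def by auto
      have "L3 * a \<le> L3 * (\<epsilon> / (2 * (L3 + 1)))" using L3nn unfolding a_def
        by (intro mult_left_mono) auto
      also have "\<dots> \<le> \<epsilon> / 2" using L3nn eps by (simp add: field_simps)
      finally show "L3 * a \<le> \<epsilon> / 2" .
    qed
    have b: "b > 0" "L1 * b \<le> \<epsilon> / 2" using eps L1nn unfolding b_def by (auto simp: field_simps)
    have ev1: "eventually (\<lambda>k. dist (x k) xbar < r / 3) G"
      unfolding G_def by (rule tendstoD[OF K(3)]) (use r in simp)
    have ev2: "eventually (\<lambda>k. dist (norm (d k)) 0 < r / 3) G"
      by (rule tendstoD[OF dG]) (use r in simp)
    have ev3: "eventually (\<lambda>k. dist ((1 / norm (d k)) *\<^sub>R d k) dbar < a) G"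
      unfolding G_def by (rule tendstoD[OF K(5)]) (use a in simp)
    have ev4: "eventually (\<lambda>k. dist (\<rho> k) 0 < b) G"
      by (rule tendstoD[OF rhoG]) (use b in simp)
    have evb: "eventually (\<lambda>k. ereal (- \<epsilon>) \<le>
        (\<lambda>(y, t). ereal ((E (y + t *\<^sub>R dbar) - E y) / t)) (s k)) G"
      using evK ev1 ev2 ev3 ev4
    proof eventually_elim
      case (elim k)
      define t where "t = norm (d k)"
      define u where "u = (1 / t) *\<^sub>R d k"
      have "d k \<noteq> 0" using elim(1) K(4) D0[of k] by metis
      then have t: "t > 0" unfolding t_def by simp
      have du: "d k = t *\<^sub>R u" unfolding u_def using t by simp
      have nu: "norm u = 1" unfolding u_def t_def using \<open>d k \<noteq> 0\<close> by simp
      have tr: "t < r / 3" using elim(3) unfolding t_def by simp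
      have ua: "norm (dbar - u) < a" using elim(4) unfolding u_def t_def by (simp add: dist_norm norm_minus_commute)
      have rb: "\<rho> k < b" using elim(5) rho_pos[of k] by (simp add: dist_real_def)
      have xb: "x k \<in> ball xbar r" using elim(2) r by (simp add: dist_commute)
      have yb: "x k + d k \<in> ball xbar r"
      proof -
        have "dist xbar (x k + d k) \<le> dist xbar (x k) + norm (d k)"
          by (metis dist_commute dist_norm dist_triangle2 add_diff_cancel_left' norm_minus_commute)
        moreover have "dist xbar (x k) < r / 3" using elim(2) by (simp add: dist_commute)
        ultimately show ?thesis using tr r unfolding t_def by simp
      qed
      define w where "w = x k + t *\<^sub>R dbar"
      have ndb: "norm dbar \<le> 2"
        using norm_triangle_ineq[of u "dbar - u"] nu ua a by simp
      have wb: "w \<in> ball xbar r"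
      proof -
        have "dist xbar w \<le> dist xbar (x k) + norm (t *\<^sub>R dbar)"
          unfolding w_def by (metis dist_commute dist_norm dist_triangle2 add_diff_cancel_left' norm_minus_commute)
        also have "norm (t *\<^sub>R dbar) \<le> t * 2" using t ndb by (simp add: mult_left_mono)
        finally have "dist xbar w \<le> dist xbar (x k) + t * 2" by simp
        moreover have "dist xbar (x k) < r / 3" using elim(2) by (simp add: dist_commute)
        ultimately show ?thesis using tr r by simp
      qed
      have wy: "w - (x k + d k) = t *\<^sub>R (dbar - u)" unfolding w_def du by (simp add: algebra_simps)
      have "\<bar>E w - E (x k + d k)\<bar> \<le> L3 * dist w (x k + d k)"
        using lipschitz_onD[OF L3r wb yb] by (simp add: dist_real_def)
      also have "dist w (x k + d k) = t * norm (dbar - u)" using wy t by (simp add: dist_norm)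
      finally have A: "\<bar>E w - E (x k + d k)\<bar> \<le> t * (L3 * norm (dbar - u))" by (simp add: algebra_simps)
      have "L3 * norm (dbar - u) \<le> L3 * a" using ua L3nn by (simp add: mult_left_mono)
      then have A2: "L3 * norm (dbar - u) \<le> \<epsilon> / 2" using a by linarith
      have B: "E (x k) - E (x k + d k) \<le> t * (\<rho> k * L1)"
        using key[OF elim(1) xb yb] unfolding t_def by (simp add: algebra_simps)
      have "\<rho> k * L1 \<le> b * L1" using rb L1nn by (simp add: mult_right_mono)
      then have B2: "\<rho> k * L1 \<le> \<epsilon> / 2" using b by (simp add: mult.commute)
      have S1: "t * (L3 * norm (dbar - u)) + t * (\<rho> k * L1) \<le> t * \<epsilon>"
        using A2 B2 t by (simp add: distrib_left[symmetric] mult_left_mono)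
      have "- (t * \<epsilon>) \<le> E w - E (x k)"
        using A B S1 by linarith
      then have "- (t * \<epsilon>) / t \<le> (E w - E (x k)) / t" by (rule divide_right_mono) (use t in simp)
      then have "- \<epsilon> \<le> (E w - E (x k)) / t" using t by simp
      then show ?case unfolding s_def w_def t_def by simp
    qed
    obtain k where "k \<in> K" "P (s k) \<and> ereal (- \<epsilon>) \<le>
        (\<lambda>(y, t). ereal ((E (y + t *\<^sub>R dbar) - E y) / t)) (s k)"
      using ev_witness[OF K(1) eventually_conj[OF evPs evb, unfolded G_def]] by blast
    then show "\<exists>zz. P zz \<and> ereal (- \<epsilon>) \<le>
        (\<lambda>(y, t). ereal ((real_of_ereal (c_ext g Gext h p (y + t *\<^sub>R dbar))
            - real_of_ereal (c_ext g Gext h p y)) / t)) zz"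
      unfolding E_def by blast
  qed
qed
end
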